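(* Let $r\ge0$ be an integer, $\lambda\ge0$, $\theta^*,\epsilon\in\mathbb{R}^n$ and $y=\theta^*+\epsilon$. Let $\hat\theta^{(r,\lambda)}$ be any $r$th order Minmax Trend Filtering estimator computed from $y$ with tuning parameter $\lambda$. Then for every $i\in[n]$, $$\max_{J\in\mathcal{I}:\, i\in J}\Big(\mathrm{Bias}^{(r)}_-(i,J,\theta^* )-SE^{(r)}(i,J,\lambda)\Big)\le \hat\theta^{(r,\lambda)}_i-\theta^*_i\le \min_{J\in\mathcal{I}:\, i\in J}\Big(\mathrm{Bias}^{(r)}_+(i,J,\theta^* )+SE^{(r)}(i,J,\lambda)\Big).$$
   Context: $[n]=\{1,\dots,n\}$; an interval is $[a:b]=\{a,\dots,b\}$, $1\le a\le b\le n$; $\mathcal{I}$ is the set of all intervals; $v_I$ is the restriction of $v$ to $I$. For an interval $I=[a:b]$, $P^{(|I|,r)}$ is the orthogonal projection matrix in $\mathbb{R}^{|I|}$ onto $\{(p(a/n),\dots,p(b/n)): p \text{ a real polynomial of degree}\le r\}$ (this depends only on $|I|$); for $i\in I$, $(P^{(|I|,r)}v_I)_i$ is the entry of $P^{(|I|,r)}v_I$ at the position of $i$. For intervals $I\subseteq J=[j_1:j_2]$: $C_{I,J}=1$ if $I\cap\{j_1,j_2\}=\emptyset$, $C_{I,J}=-1$ if $I=J$, $C_{I,J}=0$ otherwise. An $r$th order Minmax Trend Filtering estimator with tuning $\lambda\ge0$ is any $\hat\theta\in\mathbb{R}^n$ such that for every $i$, $\max_{J\in\mathcal{I}: i\in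 J}\min_{I\in\mathcal{I}: i\in I\subseteq J}[(P^{(|I|,r)}y_I)_i+\lambda C_{I,J}/|I|]\le\hat\theta_i\le\min_{J\in\mathcal{I}: i\in J}\max_{I\in\mathcal{I}: i\in I\subseteq J}[(P^{(|I|,r)}y_I)_i-\lambda C_{I,J}/|I|]$. Biases: $\mathrm{Bias}^{(r)}_+(i,J,\theta^* )=\max_{I\in\mathcal{I}: i\in I\subseteq J}[(P^{(|I|,r)}\theta^*_I)_i-\theta^*_i]$ and $\mathrm{Bias}^{(r)}_-(i,J,\theta^* )=\min_{I\in\mathcal{I}: i\in I\subseteq J}[(P^{(|I|,r)}\theta^*_I)_i-\theta^*_i]$. Effective noise: $M^{(r)}=\max_{I\in\mathcal{I}}\big[\|P^{(|I|,r)}\epsilon_I\|_\infty\sqrt{|I|}\big]$. For $J=[j_1:j_2]\ni i$, $\mathrm{Dist}(i,\partial J)=\min\{i-j_1+1,\ j_2-i+1\}$, and $SE^{(r)}(i,J,\lambda)=\frac{M^{(r)}}{\sqrt{\mathrm{Dist}(i,\partial J)}}+\frac{M^{(r)}}{\sqrt{|J|}}+\frac{(M^{(r)})^2}{4\lambda}+\frac{\lambda}{|J|}$ (with $(M^{(r)})^2/(4\cdot 0)=+\infty$). *)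

theory Defs
  imports Complex_Main "HOL-Computational_Algebra.Polynomial" "HOL-Library.Extended_Real"
begin

text \<open>Vectors in R^n are functions nat => real; only the entries 1..n matter.
  An interval [a:b] is the pair (a,b) with 1 <= a <= b <= n.\<close>

type_synonym ivl = "nat \<times> nat"

definition intervals :: "nat \<Rightarrow> ivl set" where
  "intervals n = {(a,b). 1 \<le> a \<and> a \<le> b \<and> b \<le> n}"

definition ivl_set :: "ivl \<Rightarrow> nat set" where
  "ivl_set I = {fst I..snd I}"

definition ivl_card :: "ivl \<Rightarrow> nat" where
  "ivl_card I = snd I + 1 - fst I"

definition polyspace :: "nat \<Rightarrow> nat \<Rightarrow> ivl \<Rightarrow> (nat \<Rightarrow> real) set" where
  "polyspace n r I = {w. \<exists>p :: real poly. degree p \<le> r \<and>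
      (\<forall>k. w k = (if k \<in> ivl_set I then poly p (real k / real n) else 0))}"

text \<open>(P^{(|I|,r)} v_I)_i : the entry at position i of the orthogonal projection
  of v_I onto the polynomial space (w is the projection iff w lies in the
  space and v_I - w is orthogonal to the space).\<close>
definition projfit :: "nat \<Rightarrow> nat \<Rightarrow> (nat \<Rightarrow> real) \<Rightarrow> ivl \<Rightarrow> nat \<Rightarrow> real" where
  "projfit n r v I i = (THE w. w \<in> polyspace n r I \<and>
      (\<forall>u \<in> polyspace n r I. (\<Sum>k\<in>ivl_set I. (v k - w k) * u k) = 0)) i"

definition Cfun :: "ivl \<Rightarrow> ivl \<Rightarrow> real" where
  "Cfun I J = (if fst J \<notin> ivl_set I \<and> snd J \<notin> ivl_set I then 1
               else if I = J then -1 else 0)"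

definition ivls_at :: "nat \<Rightarrow> nat \<Rightarrow> ivl set" where
  "ivls_at n i = {J \<in> intervals n. i \<in> ivl_set J}"

definition subivls_at :: "nat \<Rightarrow> nat \<Rightarrow> ivl \<Rightarrow> ivl set" where
  "subivls_at n i J = {I \<in> intervals n. i \<in> ivl_set I \<and> ivl_set I \<subseteq> ivl_set J}"

definition is_minmax_TF :: "nat \<Rightarrow> nat \<Rightarrow> real \<Rightarrow> (nat \<Rightarrow> real) \<Rightarrow> (nat \<Rightarrow> real) \<Rightarrow> bool" where
  "is_minmax_TF n r lam y th \<longleftrightarrow> (\<forall>i \<in> {1..n}.
     (MAX J \<in> ivls_at n i. MIN I \<in> subivls_at n i J.
         projfit n r y I i + lam * Cfun I J / real (ivl_card I)) \<le> th i \<and>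
     th i \<le> (MIN J \<in> ivls_at n i. MAX I \<in> subivls_at n i J.
         projfit n r y I i - lam * Cfun I J / real (ivl_card I)))"

definition bias_plus :: "nat \<Rightarrow> nat \<Rightarrow> nat \<Rightarrow> ivl \<Rightarrow> (nat \<Rightarrow> real) \<Rightarrow> real" where
  "bias_plus n r i J th = (MAX I \<in> subivls_at n i J. projfit n r th I i - th i)"

definition bias_minus :: "nat \<Rightarrow> nat \<Rightarrow> nat \<Rightarrow> ivl \<Rightarrow> (nat \<Rightarrow> real) \<Rightarrow> real" where
  "bias_minus n r i J th = (MIN I \<in> subivls_at n i J. projfit n r th I i - th i)"

definition sup_norm_on :: "(nat \<Rightarrow> real) \<Rightarrow> ivl \<Rightarrow> real" where
  "sup_norm_on v I = (MAX k \<in> ivl_set I. \<bar>v k\<bar>)"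

definition eff_noise :: "nat \<Rightarrow> nat \<Rightarrow> (nat \<Rightarrow> real) \<Rightarrow> real" where
  "eff_noise n r eps = (MAX I \<in> intervals n.
      sup_norm_on (projfit n r eps I) I * sqrt (real (ivl_card I)))"

definition dist_bd :: "nat \<Rightarrow> ivl \<Rightarrow> nat" where
  "dist_bd i J = min (i + 1 - fst J) (snd J + 1 - i)"

text \<open>SE as an extended real; the term M^2/(4 lambda) is +infinity when lambda = 0.\<close>
definition SE :: "nat \<Rightarrow> nat \<Rightarrow> (nat \<Rightarrow> real) \<Rightarrow> nat \<Rightarrow> ivl \<Rightarrow> real \<Rightarrow> ereal" where
  "SE n r eps i J lam =
     ereal (eff_noise n r eps / sqrt (real (dist_bd i J))
            + eff_noise n r eps / sqrt (real (ivl_card J))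
            + lam / real (ivl_card J))
     + (if lam = 0 then \<infinity> else ereal ((eff_noise n r eps)\<^sup>2 / (4 * lam)))"

end

theory Submission imports Defs begin

definition ip :: "nat set \<Rightarrow> (nat \<Rightarrow> real) \<Rightarrow> (nat \<Rightarrow> real) \<Rightarrow> real" where
  "ip A u v = (\<Sum>k\<in>A. u k * v k)"

lemma ip_expand:
  "ip A (\<lambda>k. v k - (p k + t * b' k)) (\<lambda>k. u k + c * b k) =
   ip A (\<lambda>k. v k - p k) u + c * ip A (\<lambda>k. v k - p k) b - t * ip A b' u - t * c * ip A b' b"
  by (simp add: ip_def algebra_simps sum.distrib sum_subtractf sum_distrib_left)

lemma ip_sub_right: "ip A f (\<lambda>k. g k - h k) = ip A f g - ip A f h"
  by (simp add: ip_def algebra_simps sum_subtractf)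

lemma ip_add_right2: "ip A f (\<lambda>k. u k + c * b k) = ip A f u + c * ip A f b"
  by (simp add: ip_def algebra_simps sum.distrib sum_distrib_left)

lemma proj_step:
  assumes fin: "finite A"
    and closed: "\<forall>x\<in>S. \<forall>y\<in>S. \<forall>a c. (\<lambda>k. a * x k + c * y k) \<in> S"
    and ex: "\<forall>v. \<exists>w\<in>S. \<forall>u\<in>S. ip A (\<lambda>k. v k - w k) u = 0"
    and S'def: "S' = {\<lambda>k. w k + c * b k | w c. w \<in> S}"
  shows "\<forall>v. \<exists>w\<in>S'. \<forall>u\<in>S'. ip A (\<lambda>k. v k - w k) u = 0"
proof
  fix v
  obtain Pb where Pb: "Pb \<in> S" "\<forall>u\<in>S. ip A (\<lambda>k. b k - Pb k) u = 0" using ex by blast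
  obtain Pv where Pv: "Pv \<in> S" "\<forall>u\<in>S. ip A (\<lambda>k. v k - Pv k) u = 0" using ex by blast
  define b' where "b' = (\<lambda>k. b k - Pb k)"
  have hb': "\<forall>u\<in>S. ip A b' u = 0" using Pb b'_def by simp
  define d where "d = ip A b' b'"
  have bsplit: "ip A f b = ip A f b' + ip A f Pb" for f
    by (simp add: b'_def ip_sub_right)
  have bPb: "ip A b' Pb = 0" using hb' Pb by blast
  have vPb: "ip A (\<lambda>k. v k - Pv k) Pb = 0" using Pv Pb by blast
  show "\<exists>w\<in>S'. \<forall>u\<in>S'. ip A (\<lambda>k. v k - w k) u = 0"
  proof (cases "d = 0")
    case True
    have "\<forall>k\<in>A. b' k * b' k = 0"
      using True fin unfolding d_def ip_def
      by (subst sum_nonneg_eq_0_iff[symmetric]) auto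
    hence z: "\<forall>k\<in>A. b' k = 0" by simp
    have vb': "ip A (\<lambda>k. v k - Pv k) b' = 0" using z by (simp add: ip_def)
    show ?thesis
    proof (rule bexI[of _ Pv])
      show "Pv \<in> S'" unfolding S'def using Pv(1) by (intro CollectI exI[of _ Pv] exI[of _ 0]) auto
      show "\<forall>u\<in>S'. ip A (\<lambda>k. v k - Pv k) u = 0"
      proof
        fix u' assume "u' \<in> S'"
        then obtain u c where u: "u \<in> S" "u' = (\<lambda>k. u k + c * b k)" using S'def by blast
        show "ip A (\<lambda>k. v k - Pv k) u' = 0"
          using u Pv vb' vPb by (simp add: ip_add_right2 bsplit)
      qed
    qed
  next
    case False
    define t where "t = ip A (\<lambda>k. v k - Pv k) b' / d"
    have w0: "(\<lambda>k. 1 * Pv k + (- t) * Pb k) \<in> S" using closed Pv Pb by blast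
    have inS': "(\<lambda>k. Pv k + t * b' k) \<in> S'"
      unfolding S'def
      by (rule CollectI, rule exI[of _ "\<lambda>k. 1 * Pv k + (- t) * Pb k"], rule exI[of _ t])
         (use w0 in \<open>auto simp: b'_def algebra_simps\<close>)
    show ?thesis
    proof (rule bexI[OF _ inS'], rule ballI)
      fix u' assume "u' \<in> S'"
      then obtain u c where u: "u \<in> S" "u' = (\<lambda>k. u k + c * b k)" using S'def by blast
      have e1: "ip A (\<lambda>k. v k - Pv k) u = 0" using Pv u by blast
      have e2: "ip A b' u = 0" using hb' u by blast
      have e3: "ip A (\<lambda>k. v k - Pv k) b = t * d" using False by (simp add: bsplit vPb t_def)
      have e4: "ip A b' b = d" by (simp add: bsplit bPb d_def)
      show "ip A (\<lambda>k. v k - (Pv k + t * b' k)) u' = 0"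
        unfolding u(2) ip_expand e1 e2 e3 e4 by simp
    qed
  qed
qed

definition bm :: "nat \<Rightarrow> ivl \<Rightarrow> nat \<Rightarrow> nat \<Rightarrow> real" where
  "bm n I m k = (if k \<in> ivl_set I then (real k / real n) ^ m else 0)"

lemma ps_closed: "\<forall>x\<in>polyspace n r I. \<forall>y\<in>polyspace n r I. \<forall>a c. (\<lambda>k. a * x k + c * y k) \<in> polyspace n r I"
proof (intro ballI allI)
  fix x y a c assume "x \<in> polyspace n r I" "y \<in> polyspace n r I"
  then obtain p q where p: "degree p \<le> r" "\<forall>k. x k = (if k \<in> ivl_set I then poly p (real k / real n) else 0)"
    and q: "degree q \<le> r" "\<forall>k. y k = (if k \<in> ivl_set I then poly q (real k / real n) else 0)"
    unfolding polyspace_def by blast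
  have "degree (smult a p + smult c q) \<le> r"
    using p q by (meson degree_add_le degree_smult_le order_trans)
  then show "(\<lambda>k. a * x k + c * y k) \<in> polyspace n r I"
    unfolding polyspace_def using p q by (intro CollectI exI[of _ "smult a p + smult c q"]) auto
qed

lemma ps_zero: "polyspace n 0 I = {\<lambda>k. w k + c * bm n I 0 k | w c. w \<in> {\<lambda>k. 0}}"
proof (intro set_eqI iffI)
  fix x assume "x \<in> polyspace n 0 I"
  then obtain p where p: "degree p \<le> 0" "\<forall>k. x k = (if k \<in> ivl_set I then poly p (real k / real n) else 0)"
    unfolding polyspace_def by blast
  obtain a where pa: "p = [:a:]" using degree0_coeffs p(1) by blast
  then have "\<forall>z. poly p z = coeff p 0" by simp
  then have hx: "x = (\<lambda>k. 0 + coeff p 0 * bm n I 0 k)" using p(2) by (auto simp: bm_def)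
  show "x \<in> {\<lambda>k. w k + c * bm n I 0 k | w c. w \<in> {\<lambda>k. 0}}" unfolding hx
    by (rule CollectI, rule exI[of _ "\<lambda>k. 0"], rule exI[of _ "coeff p 0"]) simp
next
  fix x assume "x \<in> {\<lambda>k. w k + c * bm n I 0 k | w c. w \<in> {\<lambda>k. 0}}"
  then obtain c where "x = (\<lambda>k. c * bm n I 0 k)" by auto
  then show "x \<in> polyspace n 0 I" unfolding polyspace_def
    by (intro CollectI exI[of _ "[:c:]"]) (auto simp: bm_def)
qed

lemma ps_suc: "polyspace n (Suc r) I = {\<lambda>k. w k + c * bm n I (Suc r) k | w c. w \<in> polyspace n r I}"
proof (intro set_eqI iffI)
  fix x assume "x \<in> polyspace n (Suc r) I"
  then obtain p where p: "degree p \<le> Suc r" "\<forall>k. x k = (if k \<in> ivl_set I then poly p (real k / real n) else 0)"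
    unfolding polyspace_def by blast
  define c where "c = coeff p (Suc r)"
  define q where "q = p - monom c (Suc r)"
  have "\<forall>j>r. coeff q j = 0"
  proof (intro allI impI)
    fix j assume "j > r"
    show "coeff q j = 0"
    proof (cases "j = Suc r")
      case True then show ?thesis by (simp add: q_def c_def)
    next
      case False
      then have "j > degree p" using \<open>j > r\<close> p(1) by linarith
      then show ?thesis using False by (simp add: q_def coeff_eq_0)
    qed
  qed
  then have dq: "degree q \<le> r" by (rule degree_le)
  define w where "w = (\<lambda>k. if k \<in> ivl_set I then poly q (real k / real n) else 0)"
  have "w \<in> polyspace n r I" unfolding polyspace_def w_def using dq by blast
  moreover have "x = (\<lambda>k. w k + c * bm n I (Suc r) k)"
    using p(2) by (auto simp: w_def bm_def q_def poly_monom)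
  ultimately show "x \<in> {\<lambda>k. w k + c * bm n I (Suc r) k | w c. w \<in> polyspace n r I}" by blast
next
  fix x assume "x \<in> {\<lambda>k. w k + c * bm n I (Suc r) k | w c. w \<in> polyspace n r I}"
  then obtain w c where w: "w \<in> polyspace n r I" "x = (\<lambda>k. w k + c * bm n I (Suc r) k)" by blast
  then obtain q where q: "degree q \<le> r" "\<forall>k. w k = (if k \<in> ivl_set I then poly q (real k / real n) else 0)"
    unfolding polyspace_def by blast
  have "degree (q + monom c (Suc r)) \<le> Suc r"
    using q(1) by (meson degree_add_le degree_monom_le le_SucI)
  then show "x \<in> polyspace n (Suc r) I" unfolding polyspace_def
    using q w(2) by (intro CollectI exI[of _ "q + monom c (Suc r)"]) (auto simp: bm_def poly_monom)
qed

lemma fin_ivl: "finite (ivl_set I)" by (simp add: ivl_set_def)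

lemma proj_exists: "\<forall>v. \<exists>w\<in>polyspace n r I. \<forall>u\<in>polyspace n r I. ip (ivl_set I) (\<lambda>k. v k - w k) u = 0"
proof (induction r)
  case 0
  show ?case
  proof (rule proj_step[OF fin_ivl _ _ ps_zero])
    show "\<forall>x\<in>{\<lambda>k. 0::real}. \<forall>y\<in>{\<lambda>k. 0}. \<forall>a c. (\<lambda>k. a * x k + c * y k) \<in> {\<lambda>k. 0::real}" by simp
    show "\<forall>v. \<exists>w\<in>{\<lambda>k. 0::real}. \<forall>u\<in>{\<lambda>k. 0::real}. ip (ivl_set I) (\<lambda>k. v k - w k) u = 0"
      by (simp add: ip_def)
  qed
next
  case (Suc r)
  show ?case by (rule proj_step[OF fin_ivl ps_closed Suc ps_suc])
qed

lemma projfit_eq: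
  assumes "w \<in> polyspace n r I" "\<forall>u\<in>polyspace n r I. (\<Sum>k\<in>ivl_set I. (v k - w k) * u k) = 0"
  shows "projfit n r v I = w"
  unfolding projfit_def
proof (rule the_equality)
  show "w \<in> polyspace n r I \<and> (\<forall>u\<in>polyspace n r I. (\<Sum>k\<in>ivl_set I. (v k - w k) * u k) = 0)"
    using assms by blast
next
  fix w2 assume h: "w2 \<in> polyspace n r I \<and> (\<forall>u\<in>polyspace n r I. (\<Sum>k\<in>ivl_set I. (v k - w2 k) * u k) = 0)"
  define d where "d = (\<lambda>k. 1 * w2 k + (-1) * w k)"
  have dS: "d \<in> polyspace n r I" using ps_closed h assms(1) unfolding d_def by blast
  have "(\<Sum>k\<in>ivl_set I. (v k - w k) * d k) = 0" "(\<Sum>k\<in>ivl_set I. (v k - w2 k) * d k) = 0"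
    using assms(2) h dS by auto
  then have "(\<Sum>k\<in>ivl_set I. (v k - w k) * d k) - (\<Sum>k\<in>ivl_set I. (v k - w2 k) * d k) = 0" by simp
  then have "(\<Sum>k\<in>ivl_set I. d k * d k) = 0"
    by (simp add: sum_subtractf[symmetric] d_def algebra_simps)
  then have "\<forall>k\<in>ivl_set I. d k * d k = 0"
    using fin_ivl by (subst (asm) sum_nonneg_eq_0_iff) auto
  then have eqI: "\<forall>k\<in>ivl_set I. w2 k = w k" by (simp add: d_def)
  have "\<forall>k. k \<notin> ivl_set I \<longrightarrow> w2 k = 0 \<and> w k = 0"
    using h assms(1) unfolding polyspace_def by auto
  then show "w2 = w" using eqI by (metis ext)
qed

lemma projfit_char:
  "projfit n r v I \<in> polyspace n r I \<and> (\<forall>u\<in>polyspace n r I. (\<Sum>k\<in>ivl_set I. (v k - projfit n r v I k) * u k) = 0)"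
proof -
  obtain w where "w \<in> polyspace n r I" "\<forall>u\<in>polyspace n r I. ip (ivl_set I) (\<lambda>k. v k - w k) u = 0"
    using proj_exists by blast
  moreover then have "projfit n r v I = w" by (intro projfit_eq) (auto simp: ip_def)
  ultimately show ?thesis by (simp add: ip_def)
qed

lemma projfit_add: "projfit n r (\<lambda>k. a k + b k) I k = projfit n r a I k + projfit n r b I k"
proof -
  have "projfit n r (\<lambda>k. a k + b k) I = (\<lambda>k. 1 * projfit n r a I k + 1 * projfit n r b I k)"
  proof (rule projfit_eq)
    show "(\<lambda>k. 1 * projfit n r a I k + 1 * projfit n r b I k) \<in> polyspace n r I"
      using ps_closed projfit_char by blast
    show "\<forall>u\<in>polyspace n r I. (\<Sum>k\<in>ivl_set I. (a k + b k - (1 * projfit n r a I k + 1 * projfit n r b I k)) * u k) = 0"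
    proof
      fix u assume u: "u \<in> polyspace n r I"
      have "(\<Sum>k\<in>ivl_set I. (a k + b k - (1 * projfit n r a I k + 1 * projfit n r b I k)) * u k)
          = (\<Sum>k\<in>ivl_set I. (a k - projfit n r a I k) * u k) + (\<Sum>k\<in>ivl_set I. (b k - projfit n r b I k) * u k)"
        by (simp add: sum.distrib[symmetric] algebra_simps)
      then show "(\<Sum>k\<in>ivl_set I. (a k + b k - (1 * projfit n r a I k + 1 * projfit n r b I k)) * u k) = 0"
        using projfit_char u by simp
    qed
  qed
  then show ?thesis by simp
qed


lemma ivl_card_pos: "I \<in> intervals n \<Longrightarrow> ivl_card I \<ge> 1"
  by (auto simp: intervals_def ivl_card_def)

lemma noise_bound:
  assumes "I \<in> intervals n" "i \<in> ivl_set I"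
  shows "\<bar>projfit n r eps I i\<bar> * sqrt (real (ivl_card I)) \<le> eff_noise n r eps"
proof -
  have fI: "finite (intervals n)" 
    by (rule finite_subset[of _ "{1..n} \<times> {1..n}"]) (auto simp: intervals_def)
  have "\<bar>projfit n r eps I i\<bar> \<le> sup_norm_on (projfit n r eps I) I"
    unfolding sup_norm_on_def using assms(2) fin_ivl by (intro Max_ge) auto
  then have "\<bar>projfit n r eps I i\<bar> * sqrt (real (ivl_card I)) \<le> sup_norm_on (projfit n r eps I) I * sqrt (real (ivl_card I))"
    by (intro mult_right_mono) auto
  also have "\<dots> \<le> eff_noise n r eps"
    unfolding eff_noise_def using assms(1) fI by (intro Max_ge) auto
  finally show ?thesis .
qed

lemma core:
  fixes M x lam :: real
  assumes M0: "M \<ge> 0" and lp: "lam > 0"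
    and xb: "\<bar>x\<bar> * sqrt (real (ivl_card I)) \<le> M"
    and I: "I \<in> subivls_at n i J" and J: "J \<in> ivls_at n i"
  shows "x - lam * Cfun I J / real (ivl_card I) \<le>
     M / sqrt (real (dist_bd i J)) + M / sqrt (real (ivl_card J)) + lam / real (ivl_card J) + M\<^sup>2 / (4 * lam)"
proof -
  have Iint: "I \<in> intervals n" and iI: "i \<in> ivl_set I" and IJ: "ivl_set I \<subseteq> ivl_set J"
    using I by (auto simp: subivls_at_def)
  have Jint: "J \<in> intervals n" and iJ: "i \<in> ivl_set J" using J by (auto simp: ivls_at_def)
  define cI where "cI = real (ivl_card I)"
  have cI1: "cI \<ge> 1" using ivl_card_pos[OF Iint] by (simp add: cI_def)
  define s where "s = sqrt cI"
  have s0: "s > 0" using cI1 by (simp add: s_def)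
  have ss: "s * s = cI" using cI1 by (simp add: s_def)
  have "x * s \<le> \<bar>x\<bar> * s" using s0 by (intro mult_right_mono) auto
  also have "\<dots> \<le> M" using xb by (simp add: s_def cI_def)
  finally have xs: "x \<le> M / s" by (simp add: pos_le_divide_eq[OF s0])
  have D1: "dist_bd i J \<ge> 1" using iJ by (auto simp: dist_bd_def ivl_set_def)
  have cJ1: "ivl_card J \<ge> 1" using ivl_card_pos[OF Jint] .
  have t1: "M / sqrt (real (dist_bd i J)) \<ge> 0" using M0 by simp
  have t2: "M / sqrt (real (ivl_card J)) \<ge> 0" using M0 by simp
  have t3: "lam / real (ivl_card J) \<ge> 0" using lp by simp
  have t4: "M\<^sup>2 / (4 * lam) \<ge> 0" using lp by simp
  consider (A) "Cfun I J = 1" "fst J \<notin> ivl_set I" "snd J \<notin> ivl_set I"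
    | (B) "Cfun I J = -1" "I = J" | (C) "Cfun I J = 0" "fst J \<in> ivl_set I \<or> snd J \<in> ivl_set I"
  proof (cases "fst J \<notin> ivl_set I \<and> snd J \<notin> ivl_set I")
    case True then show thesis using that(1) by (simp add: Cfun_def)
  next
    case False then show thesis using that(2,3) by (cases "I = J") (auto simp: Cfun_def)
  qed
  then show ?thesis
  proof cases
    case A
    have key: "M / s - lam / cI \<le> M\<^sup>2 / (4 * lam)"
    proof -
      have "M\<^sup>2 / (4 * lam) - (M / s - lam / cI) = (M * s - 2 * lam)\<^sup>2 / (4 * lam * cI)"
        using s0 lp ss[symmetric] by (simp add: field_simps power2_eq_square)
      also have "\<dots> \<ge> 0" using lp cI1 by simp
      finally show ?thesis by simp
    qed
    have "x - lam * Cfun I J / cI \<le> M / s - lam / cI" using A xs by simp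
    then show ?thesis using key t1 t2 t3 by (simp add: cI_def)
  next
    case B
    then show ?thesis using xs t1 t4 by (simp add: cI_def s_def)
  next
    case C
    have "ivl_card I \<ge> dist_bd i J"
      using C(2) iI IJ by (auto simp: ivl_card_def dist_bd_def ivl_set_def)
    then have "sqrt (real (dist_bd i J)) \<le> s" by (simp add: s_def cI_def)
    then have "M / s \<le> M / sqrt (real (dist_bd i J))"
    proof (rule divide_left_mono)
      have "sqrt (real (dist_bd i J)) > 0" using D1 by simp
      then show "0 < s * sqrt (real (dist_bd i J))" using s0 by simp
    qed (use M0 \<open>sqrt (real (dist_bd i J)) \<le> s\<close> in auto)
    then show ?thesis using C xs t2 t3 t4 by simp
  qed
qed


lemma SE_fin: "lam > 0 \<Longrightarrow> SE n r eps i J lam = ereal (eff_noise n r eps / sqrt (real (dist_bd i J))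
            + eff_noise n r eps / sqrt (real (ivl_card J))
            + lam / real (ivl_card J) + (eff_noise n r eps)\<^sup>2 / (4 * lam))"
  by (simp add: SE_def)

lemma SE_inf: "SE n r eps i J 0 = \<infinity>"
  by (simp add: SE_def)

theorem proposition1:
  fixes n r :: nat and lam :: real and theta eps y thetahat :: "nat \<Rightarrow> real"
  assumes "lam \<ge> 0"
    and "\<forall>k. y k = theta k + eps k"
    and "is_minmax_TF n r lam y thetahat"
    and "i \<in> {1..n}"
  shows "(MAX J \<in> ivls_at n i. ereal (bias_minus n r i J theta) - SE n r eps i J lam)
           \<le> ereal (thetahat i - theta i)
         \<and> ereal (thetahat i - theta i)
           \<le> (MIN J \<in> ivls_at n i. ereal (bias_plus n r i J theta) + SE n r eps i J lam)"
proof -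
  have yeq: "y = (\<lambda>k. theta k + eps k)" using assms(2) by auto
  have yadd: "projfit n r y I i = projfit n r theta I i + projfit n r eps I i" for I
    unfolding yeq by (rule projfit_add)
  have fI: "finite (intervals n)"
    by (rule finite_subset[of _ "{1..n} \<times> {1..n}"]) (auto simp: intervals_def)
  have ii: "(i, i) \<in> intervals n" using assms(4) by (auto simp: intervals_def)
  have fA: "finite (ivls_at n i)" using fI by (simp add: ivls_at_def)
  have nA: "ivls_at n i \<noteq> {}" using ii by (auto simp: ivls_at_def ivl_set_def)
  have fS: "finite (subivls_at n i J)" for J using fI by (simp add: subivls_at_def)
  have nS: "subivls_at n i J \<noteq> {}" if "J \<in> ivls_at n i" for J
    using ii that by (auto simp: subivls_at_def ivls_at_def ivl_set_def)
  define M where "M = eff_noise n r eps"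
  have M0: "M \<ge> 0"
  proof -
    have "i \<in> ivl_set (i, i)" by (simp add: ivl_set_def)
    then have "\<bar>projfit n r eps (i, i) i\<bar> * sqrt (real (ivl_card (i, i))) \<le> M"
      using noise_bound[OF ii] unfolding M_def by blast
    moreover have "0 \<le> \<bar>projfit n r eps (i, i) i\<bar> * sqrt (real (ivl_card (i, i)))" by simp
    ultimately show ?thesis by linarith
  qed
  have tf: "(MAX J \<in> ivls_at n i. MIN I \<in> subivls_at n i J.
         projfit n r y I i + lam * Cfun I J / real (ivl_card I)) \<le> thetahat i \<and>
     thetahat i \<le> (MIN J \<in> ivls_at n i. MAX I \<in> subivls_at n i J.
         projfit n r y I i - lam * Cfun I J / real (ivl_card I))"
    using assms(3,4) unfolding is_minmax_TF_def by blast
  show ?thesis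
  proof
    show "(MAX J \<in> ivls_at n i. ereal (bias_minus n r i J theta) - SE n r eps i J lam)
           \<le> ereal (thetahat i - theta i)"
    proof -
      have key: "ereal (bias_minus n r i J theta) - SE n r eps i J lam \<le> ereal (thetahat i - theta i)"
        if J: "J \<in> ivls_at n i" for J
      proof -
      let ?f = "\<lambda>I. projfit n r y I i + lam * Cfun I J / real (ivl_card I)"
      have "(MIN I \<in> subivls_at n i J. ?f I) \<in> ?f ` subivls_at n i J"
        by (rule Min_in) (use fS nS[OF J] in auto)
      then obtain I0 where I0: "I0 \<in> subivls_at n i J" "(MIN I \<in> subivls_at n i J. ?f I) = ?f I0"
        by blast
      have "?f I0 \<le> (MAX J \<in> ivls_at n i. MIN I \<in> subivls_at n i J. projfit n r y I i + lam * Cfun I J / real (ivl_card I))"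
        using I0(2)[symmetric] J fA by (simp add: Max_ge)
      then have th1: "?f I0 \<le> thetahat i" using tf by linarith
      have bm: "bias_minus n r i J theta \<le> projfit n r theta I0 i - theta i"
        unfolding bias_minus_def using I0(1) fS by (intro Min_le) auto
      show ?thesis
      proof (cases "lam = 0")
        case True then show ?thesis by (simp add: SE_inf)
      next
        case False
        then have lp: "lam > 0" using assms(1) by simp
        have I0i: "I0 \<in> intervals n" "i \<in> ivl_set I0" using I0(1) by (auto simp: subivls_at_def)
        have xb: "\<bar>- projfit n r eps I0 i\<bar> * sqrt (real (ivl_card I0)) \<le> M"
          using noise_bound[OF I0i] by (simp add: M_def)
        have c: "- projfit n r eps I0 i - lam * Cfun I0 J / real (ivl_card I0) \<le>
          M / sqrt (real (dist_bd i J)) + M / sqrt (real (ivl_card J)) + lam / real (ivl_card J) + M\<^sup>2 / (4 * lam)"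
          by (rule core[OF M0 lp xb I0(1) J])
        show ?thesis using c th1 bm yadd[of I0] by (simp add: SE_fin[OF lp] M_def)
      qed
      qed
      show ?thesis using fA nA key by (simp add: Max_le_iff)
    qed
  next
    show "ereal (thetahat i - theta i)
           \<le> (MIN J \<in> ivls_at n i. ereal (bias_plus n r i J theta) + SE n r eps i J lam)"
    proof -
      have key: "ereal (thetahat i - theta i) \<le> ereal (bias_plus n r i J theta) + SE n r eps i J lam"
        if J: "J \<in> ivls_at n i" for J
      proof -
      let ?f = "\<lambda>I. projfit n r y I i - lam * Cfun I J / real (ivl_card I)"
      have "(MAX I \<in> subivls_at n i J. ?f I) \<in> ?f ` subivls_at n i J"
        by (rule Max_in) (use fS nS[OF J] in auto)
      then obtain I0 where I0: "I0 \<in> subivls_at n i J" "(MAX I \<in> subivls_at n i J. ?f I) = ?f I0"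
        by blast
      have "(MIN J \<in> ivls_at n i. MAX I \<in> subivls_at n i J. projfit n r y I i - lam * Cfun I J / real (ivl_card I)) \<le> ?f I0"
        using I0(2)[symmetric] J fA by (simp add: Min_le)
      then have th1: "thetahat i \<le> ?f I0" using tf by linarith
      have bp: "projfit n r theta I0 i - theta i \<le> bias_plus n r i J theta"
        unfolding bias_plus_def using I0(1) fS by (intro Max_ge) auto
      show ?thesis
      proof (cases "lam = 0")
        case True then show ?thesis by (simp add: SE_inf)
      next
        case False
        then have lp: "lam > 0" using assms(1) by simp
        have I0i: "I0 \<in> intervals n" "i \<in> ivl_set I0" using I0(1) by (auto simp: subivls_at_def)
        have xb: "\<bar>projfit n r eps I0 i\<bar> * sqrt (real (ivl_card I0)) \<le> M"
          using noise_bound[OF I0i] by (simp add: M_def)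
        have c: "projfit n r eps I0 i - lam * Cfun I0 J / real (ivl_card I0) \<le>
          M / sqrt (real (dist_bd i J)) + M / sqrt (real (ivl_card J)) + lam / real (ivl_card J) + M\<^sup>2 / (4 * lam)"
          by (rule core[OF M0 lp xb I0(1) J])
        show ?thesis using c th1 bp yadd[of I0] by (simp add: SE_fin[OF lp] M_def)
      qed
      qed
      show ?thesis using fA nA key by (simp add: Min_ge_iff)
    qed
  qed
qed

end
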